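(* Let $\Lambda=(\Delta,R)$ be a gentle bound quiver. If $\sigma$ is a maximal path in $\Lambda$, then the coextension $[\sigma]\Lambda$ is a gentle bound quiver.
   Context: Paths $\alpha_1\cdots\alpha_l$ ($l\ge1$) satisfy $s\alpha_i=t\alpha_{i+1}$; $t\sigma=t\alpha_1$ and $\alpha_1$ is the terminating arrow of $\sigma$. A bound quiver $(\Delta,R)$ is a finite quiver without isolated vertices with a set $R$ of paths of length $\ge2$ such that for some $n$ every path of length $n$ contains a subpath in $R$. It is gentle if connected and: $R$ consists of paths of length 2; each vertex has at most two outgoing and at most two incoming arrows; for each arrow $\alpha$ there is at most one arrow $\alpha'$ with $s\alpha'=t\alpha$ and $\alpha'\alpha\notin R$, at most one with $t\alpha'=s\alpha$ and $\alpha\alpha'\notin R$, at most one with $s\alpha'=t\alpha$ and $\alpha'\alpha\in R$, and at most one with $t\alpha'=s\alpha$ and $\alpha\alpha'\in R$. A path in $\Lambda$ is a path with no subpath in $R$; it is maximal if not a subpath of a longer path in $\Lambda$. For a maximal path $\sigma$ in $\Lambda$, the coextension $[\sigma]\Lambda=(\Delta',R')$ is defined by: $\Delta'$ is $\Delta$ with a new vertex $x$ and a new arrow $\alpha$ with $s\alpha=t\sigma$, $t\alpha=x$; $R'=R\cup\{\alpha\alpha' : \alpha'\in\Delta_1,\ t\alpha'=t\sigma,\ \alpha'\text{ is not the terminating arrow of }\sigma\}$. *)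

theory Defs
  imports Main
begin

text \<open>A path \<alpha>1...\<alpha>l (l \<ge> 1) is represented by the list
[\<alpha>1, ..., \<alpha>l] with s \<alpha>i = t \<alpha>(i+1); its terminating arrow is
the head of the list, and t \<sigma> = t (hd \<sigma>).\<close>

record ('v, 'a) bquiver =
  verts :: "'v set"
  arrs  :: "'a set"
  src   :: "'a \<Rightarrow> 'v"
  tgt   :: "'a \<Rightarrow> 'v"
  rels  :: "'a list set"

definition is_path :: "('v, 'a) bquiver \<Rightarrow> 'a list \<Rightarrow> bool" where
  "is_path Q p \<longleftrightarrow> p \<noteq> [] \<and> set p \<subseteq> arrs Q \<and>
     (\<forall>i. Suc i < length p \<longrightarrow> src Q (p ! i) = tgt Q (p ! Suc i))"

definition subpath :: "'a list \<Rightarrow> 'a list \<Rightarrow> bool" where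
  "subpath p q \<longleftrightarrow> (\<exists>u w. q = u @ p @ w)"

definition is_quiver :: "('v, 'a) bquiver \<Rightarrow> bool" where
  "is_quiver Q \<longleftrightarrow> finite (verts Q) \<and> finite (arrs Q) \<and>
     (\<forall>a\<in>arrs Q. src Q a \<in> verts Q \<and> tgt Q a \<in> verts Q)"

definition no_isolated :: "('v, 'a) bquiver \<Rightarrow> bool" where
  "no_isolated Q \<longleftrightarrow> (\<forall>v\<in>verts Q. \<exists>a\<in>arrs Q. src Q a = v \<or> tgt Q a = v)"

definition bound_quiver :: "('v, 'a) bquiver \<Rightarrow> bool" where
  "bound_quiver Q \<longleftrightarrow> is_quiver Q \<and> no_isolated Q \<and>
     (\<forall>r\<in>rels Q. is_path Q r \<and> length r \<ge> 2) \<and>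
     (\<exists>n\<ge>1. \<forall>p. is_path Q p \<and> length p = n \<longrightarrow> (\<exists>r\<in>rels Q. subpath r p))"

definition connected_quiver :: "('v, 'a) bquiver \<Rightarrow> bool" where
  "connected_quiver Q \<longleftrightarrow> verts Q \<noteq> {} \<and>
     (\<forall>u\<in>verts Q. \<forall>v\<in>verts Q.
        (u, v) \<in> ({(src Q a, tgt Q a) | a. a \<in> arrs Q} \<union>
                  {(tgt Q a, src Q a) | a. a \<in> arrs Q})\<^sup>*)"

definition gentle :: "('v, 'a) bquiver \<Rightarrow> bool" where
  "gentle Q \<longleftrightarrow> bound_quiver Q \<and> connected_quiver Q \<and>
     (\<forall>r\<in>rels Q. length r = 2) \<and>
     (\<forall>v\<in>verts Q. card {a\<in>arrs Q. src Q a = v} \<le> 2 \<and> card {a\<in>arrs Q. tgt Q a = v} \<le> 2) \<and>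
     (\<forall>\<alpha>\<in>arrs Q.
        card {\<beta>\<in>arrs Q. src Q \<beta> = tgt Q \<alpha> \<and> [\<beta>, \<alpha>] \<notin> rels Q} \<le> 1 \<and>
        card {\<beta>\<in>arrs Q. tgt Q \<beta> = src Q \<alpha> \<and> [\<alpha>, \<beta>] \<notin> rels Q} \<le> 1 \<and>
        card {\<beta>\<in>arrs Q. src Q \<beta> = tgt Q \<alpha> \<and> [\<beta>, \<alpha>] \<in> rels Q} \<le> 1 \<and>
        card {\<beta>\<in>arrs Q. tgt Q \<beta> = src Q \<alpha> \<and> [\<alpha>, \<beta>] \<in> rels Q} \<le> 1)"

definition path_in :: "('v, 'a) bquiver \<Rightarrow> 'a list \<Rightarrow> bool" where
  "path_in Q p \<longleftrightarrow> is_path Q p \<and> \<not> (\<exists>r\<in>rels Q. subpath r p)"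

definition maximal_path :: "('v, 'a) bquiver \<Rightarrow> 'a list \<Rightarrow> bool" where
  "maximal_path Q p \<longleftrightarrow> path_in Q p \<and>
     \<not> (\<exists>q. path_in Q q \<and> length q > length p \<and> subpath p q)"

text \<open>Coextension [\<sigma>]\<Lambda>, with new vertex x and new arrow \<alpha>
(assumed fresh), s \<alpha> = t \<sigma>, t \<alpha> = x.\<close>
definition coext :: "('v, 'a) bquiver \<Rightarrow> 'a list \<Rightarrow> 'v \<Rightarrow> 'a \<Rightarrow> ('v, 'a) bquiver" where
  "coext Q \<sigma> x \<alpha> = Q\<lparr> verts := insert x (verts Q),
                       arrs := insert \<alpha> (arrs Q),
                       src := (src Q)(\<alpha> := tgt Q (hd \<sigma>)),
                       tgt := (tgt Q)(\<alpha> := x),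
                       rels := rels Q \<union> {[\<alpha>, \<alpha>'] | \<alpha>'. \<alpha>' \<in> arrs Q \<and>
                                 tgt Q \<alpha>' = tgt Q (hd \<sigma>) \<and> \<alpha>' \<noteq> hd \<sigma>} \<rparr>"

end

theory Submission
  imports Defs
begin

lemma card_le1I:
  assumes "\<And>a b. a \<in> S \<Longrightarrow> b \<in> S \<Longrightarrow> a = b"
  shows "card S \<le> 1"
proof (cases "finite S")
  case True
  then show ?thesis using card_le_Suc0_iff_eq[OF True] assms by auto
next
  case False
  then show ?thesis by simp
qed

lemma card_le1D:
  assumes "card S \<le> 1" "finite S" "a \<in> S" "b \<in> S"
  shows "a = b"
  using card_le_Suc0_iff_eq[OF assms(2)] assms by auto

lemma subpath_cons2:
  assumes "subpath r (b # s)" "length r = 2" "s \<noteq> []"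
  shows "r = [b, hd s] \<or> subpath r s"
proof -
  obtain u w where uw: "b # s = u @ r @ w" using assms(1) unfolding subpath_def by blast
  show ?thesis
  proof (cases u)
    case Nil
    obtain r0 r1 where r: "r = [r0, r1]" using assms(2)
      by (metis One_nat_def Suc_1 length_0_conv length_Suc_conv)
    then show ?thesis using uw Nil by auto
  next
    case (Cons c u')
    then have "s = u' @ r @ w" using uw by simp
    then show ?thesis unfolding subpath_def by blast
  qed
qed

theorem lemma1p5:
  fixes Q :: "('v, 'a) bquiver" and \<sigma> :: "'a list" and x :: 'v and \<alpha> :: 'a
  assumes "gentle Q"
    and "maximal_path Q \<sigma>"
    and "x \<notin> verts Q"
    and "\<alpha> \<notin> arrs Q"
  shows "gentle (coext Q \<sigma> x \<alpha>)"
proof -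
  let ?Q = "coext Q \<sigma> x \<alpha>"
  define t0 where "t0 = tgt Q (hd \<sigma>)"
  have bq: "bound_quiver Q" and conn: "connected_quiver Q"
    and rel2: "\<forall>r\<in>rels Q. length r = 2"
    and deg: "\<forall>v\<in>verts Q. card {a\<in>arrs Q. src Q a = v} \<le> 2 \<and> card {a\<in>arrs Q. tgt Q a = v} \<le> 2"
    and ac: "\<forall>\<gamma>\<in>arrs Q.
        card {\<beta>\<in>arrs Q. src Q \<beta> = tgt Q \<gamma> \<and> [\<beta>, \<gamma>] \<notin> rels Q} \<le> 1 \<and>
        card {\<beta>\<in>arrs Q. tgt Q \<beta> = src Q \<gamma> \<and> [\<gamma>, \<beta>] \<notin> rels Q} \<le> 1 \<and>
        card {\<beta>\<in>arrs Q. src Q \<beta> = tgt Q \<gamma> \<and> [\<beta>, \<gamma>] \<in> rels Q} \<le> 1 \<and>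
        card {\<beta>\<in>arrs Q. tgt Q \<beta> = src Q \<gamma> \<and> [\<gamma>, \<beta>] \<in> rels Q} \<le> 1"
    using assms(1) unfolding gentle_def by auto
  have finV: "finite (verts Q)" and finA: "finite (arrs Q)"
    and stv: "\<And>a. a \<in> arrs Q \<Longrightarrow> src Q a \<in> verts Q \<and> tgt Q a \<in> verts Q"
    using bq unfolding bound_quiver_def is_quiver_def by auto
  have relpath: "\<forall>r\<in>rels Q. is_path Q r \<and> length r \<ge> 2"
    using bq unfolding bound_quiver_def by auto
  obtain n where n1: "n \<ge> 1" and nil: "\<And>p. is_path Q p \<Longrightarrow> length p = n \<Longrightarrow> \<exists>r\<in>rels Q. subpath r p"
    using bq unfolding bound_quiver_def by blast
  have \<sigma>in: "path_in Q \<sigma>" and \<sigma>max: "\<not> (\<exists>q. path_in Q q \<and> length q > length \<sigma> \<and> subpath \<sigma> q)"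
    using assms(2) unfolding maximal_path_def by auto
  have \<sigma>ne: "\<sigma> \<noteq> []" and \<sigma>arr: "set \<sigma> \<subseteq> arrs Q"
    and \<sigma>st: "\<forall>i. Suc i < length \<sigma> \<longrightarrow> src Q (\<sigma> ! i) = tgt Q (\<sigma> ! Suc i)"
    using \<sigma>in unfolding path_in_def is_path_def by auto
  have hdarr: "hd \<sigma> \<in> arrs Q" using \<sigma>ne \<sigma>arr by auto
  have t0v: "t0 \<in> verts Q" using stv[OF hdarr] t0_def by simp
  have xt0: "x \<noteq> t0" using t0v assms(3) by auto
  have sA: "arrs ?Q = insert \<alpha> (arrs Q)" and sV: "verts ?Q = insert x (verts Q)"
    and sS: "src ?Q = (src Q)(\<alpha> := t0)" and sT: "tgt ?Q = (tgt Q)(\<alpha> := x)"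
    and sR: "rels ?Q = rels Q \<union> {[\<alpha>, \<alpha>'] | \<alpha>'. \<alpha>' \<in> arrs Q \<and> tgt Q \<alpha>' = t0 \<and> \<alpha>' \<noteq> hd \<sigma>}"
    by (simp_all add: coext_def t0_def)
  have relsarr: "\<And>r. r \<in> rels Q \<Longrightarrow> set r \<subseteq> arrs Q"
    using relpath unfolding is_path_def by auto
  have relsQ': "\<And>\<beta> \<gamma>. [\<beta>,\<gamma>] \<in> rels ?Q \<longleftrightarrow> [\<beta>,\<gamma>] \<in> rels Q \<or> (\<beta> = \<alpha> \<and> \<gamma> \<in> arrs Q \<and> tgt Q \<gamma> = t0 \<and> \<gamma> \<noteq> hd \<sigma>)"
    using sR by auto
  have relsarr2: "\<And>\<beta> \<gamma>. [\<beta>,\<gamma>] \<in> rels Q \<Longrightarrow> \<beta> \<in> arrs Q \<and> \<gamma> \<in> arrs Q"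
    using relsarr by fastforce
  have maxk: "[\<beta>, hd \<sigma>] \<in> rels Q" if b: "\<beta> \<in> arrs Q" "src Q \<beta> = t0" for \<beta>
  proof (rule ccontr)
    assume nr: "[\<beta>, hd \<sigma>] \<notin> rels Q"
    have "is_path Q (\<beta> # \<sigma>)"
      unfolding is_path_def
    proof (intro conjI allI impI)
      show "\<beta> # \<sigma> \<noteq> []" by simp
      show "set (\<beta> # \<sigma>) \<subseteq> arrs Q" using b \<sigma>arr by auto
      fix i assume i: "Suc i < length (\<beta> # \<sigma>)"
      show "src Q ((\<beta> # \<sigma>) ! i) = tgt Q ((\<beta> # \<sigma>) ! Suc i)"
      proof (cases i)
        case 0 then show ?thesis using b t0_def \<sigma>ne by (simp add: hd_conv_nth)
      next
        case (Suc j) then show ?thesis using \<sigma>st i by simp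
      qed
    qed
    moreover have "\<not> (\<exists>r\<in>rels Q. subpath r (\<beta> # \<sigma>))"
    proof
      assume "\<exists>r\<in>rels Q. subpath r (\<beta> # \<sigma>)"
      then obtain r where r: "r \<in> rels Q" "subpath r (\<beta> # \<sigma>)" by blast
      have "r = [\<beta>, hd \<sigma>] \<or> subpath r \<sigma>" by (rule subpath_cons2[OF r(2) rel2[rule_format, OF r(1)] \<sigma>ne])
      then show False using r nr \<sigma>in unfolding path_in_def by auto
    qed
    ultimately have "path_in Q (\<beta> # \<sigma>)" unfolding path_in_def by blast
    moreover have "subpath \<sigma> (\<beta> # \<sigma>)" unfolding subpath_def
      by (rule exI[of _ "[\<beta>]"], rule exI[of _ "[]"]) simp
    ultimately show False using \<sigma>max by auto
  qed
  have ac1: "\<And>\<gamma>. \<gamma>\<in>arrs Q \<Longrightarrow> card {\<beta>\<in>arrs Q. src Q \<beta> = tgt Q \<gamma> \<and> [\<beta>, \<gamma>] \<notin> rels Q} \<le> 1"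
    and ac2: "\<And>\<gamma>. \<gamma>\<in>arrs Q \<Longrightarrow> card {\<beta>\<in>arrs Q. tgt Q \<beta> = src Q \<gamma> \<and> [\<gamma>, \<beta>] \<notin> rels Q} \<le> 1"
    and ac3: "\<And>\<gamma>. \<gamma>\<in>arrs Q \<Longrightarrow> card {\<beta>\<in>arrs Q. src Q \<beta> = tgt Q \<gamma> \<and> [\<beta>, \<gamma>] \<in> rels Q} \<le> 1"
    and ac4: "\<And>\<gamma>. \<gamma>\<in>arrs Q \<Longrightarrow> card {\<beta>\<in>arrs Q. tgt Q \<beta> = src Q \<gamma> \<and> [\<gamma>, \<beta>] \<in> rels Q} \<le> 1"
    using ac by blast+
  have finS: "\<And>P. finite {b\<in>arrs Q. P b}" by (rule finite_subset[OF _ finA]) auto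
  have ac3hd: "card {\<beta>\<in>arrs Q. src Q \<beta> = t0 \<and> [\<beta>, hd \<sigma>] \<in> rels Q} \<le> 1"
    using ac3[OF hdarr] by (simp add: t0_def)
  have outle1: "card {\<beta>\<in>arrs Q. src Q \<beta> = t0} \<le> 1"
  proof (rule card_le1I)
    fix a b assume a: "a \<in> {\<beta>\<in>arrs Q. src Q \<beta> = t0}" and b: "b \<in> {\<beta>\<in>arrs Q. src Q \<beta> = t0}"
    have "a \<in> {\<beta>\<in>arrs Q. src Q \<beta> = t0 \<and> [\<beta>, hd \<sigma>] \<in> rels Q}" using a maxk by simp
    moreover have "b \<in> {\<beta>\<in>arrs Q. src Q \<beta> = t0 \<and> [\<beta>, hd \<sigma>] \<in> rels Q}" using b maxk by simp
    ultimately show "a = b" by (rule card_le1D[OF ac3hd finS])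
  qed
  have no3: "[\<beta>,\<gamma>] \<notin> rels Q" if g: "\<gamma> \<in> arrs Q" "tgt Q \<gamma> = t0" "\<gamma> \<noteq> hd \<sigma>"
    and b: "\<beta> \<in> arrs Q" "src Q \<beta> = t0" for \<beta> \<gamma>
  proof
    assume r: "[\<beta>,\<gamma>] \<in> rels Q"
    have "\<gamma> \<in> {\<gamma>'\<in>arrs Q. tgt Q \<gamma>' = src Q \<beta> \<and> [\<beta>, \<gamma>'] \<in> rels Q}" using g b r by simp
    moreover have "hd \<sigma> \<in> {\<gamma>'\<in>arrs Q. tgt Q \<gamma>' = src Q \<beta> \<and> [\<beta>, \<gamma>'] \<in> rels Q}"
      using hdarr b maxk[OF b] by (simp add: t0_def)
    ultimately have "\<gamma> = hd \<sigma>" by (rule card_le1D[OF ac4[OF b(1)] finS])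
    then show False using g by simp
  qed
  have inle2: "card {a\<in>arrs Q. tgt Q a = t0} \<le> 2" using deg t0v by auto
  have isq: "is_quiver ?Q"
    unfolding is_quiver_def using finV finA stv t0v by (auto simp: sA sV sS sT)
  have noi: "no_isolated ?Q"
    unfolding no_isolated_def
  proof
    fix v assume "v \<in> verts ?Q"
    then have "v = x \<or> v \<in> verts Q" by (simp add: sV)
    then show "\<exists>a\<in>arrs ?Q. src ?Q a = v \<or> tgt ?Q a = v"
    proof
      assume "v = x" then show ?thesis by (auto simp: sA sT)
    next
      assume "v \<in> verts Q"
      then obtain a where "a \<in> arrs Q" "src Q a = v \<or> tgt Q a = v"
        using bq unfolding bound_quiver_def no_isolated_def by blast
      then show ?thesis using assms(4) by (auto simp: sA sS sT)
    qed
  qed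
  have pathQQ: "is_path ?Q r" if "is_path Q r" for r
  proof -
    have p: "r \<noteq> []" "set r \<subseteq> arrs Q" "\<And>i. Suc i < length r \<Longrightarrow> src Q (r ! i) = tgt Q (r ! Suc i)"
      using that unfolding is_path_def by auto
    have na: "\<And>i. i < length r \<Longrightarrow> r ! i \<noteq> \<alpha>"
      using p(2) assms(4) nth_mem by blast
    show ?thesis unfolding is_path_def
    proof (intro conjI allI impI)
      show "r \<noteq> []" by fact
      show "set r \<subseteq> arrs ?Q" using p(2) by (auto simp: sA)
      fix i assume i: "Suc i < length r"
      have "r ! i \<noteq> \<alpha>" "r ! Suc i \<noteq> \<alpha>" using na i by auto
      then show "src ?Q (r ! i) = tgt ?Q (r ! Suc i)" using p(3)[OF i] by (simp add: sS sT)
    qed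
  qed
  have rp: "\<forall>r\<in>rels ?Q. is_path ?Q r \<and> length r \<ge> 2"
  proof
    fix r assume "r \<in> rels ?Q"
    then have "r \<in> rels Q \<or> (\<exists>a. r = [\<alpha>, a] \<and> a \<in> arrs Q \<and> tgt Q a = t0)"
      by (auto simp: sR)
    then show "is_path ?Q r \<and> length r \<ge> 2"
    proof
      assume "r \<in> rels Q" then show ?thesis using relpath pathQQ by auto
    next
      assume "\<exists>a. r = [\<alpha>, a] \<and> a \<in> arrs Q \<and> tgt Q a = t0"
      then obtain a where a: "r = [\<alpha>, a]" "a \<in> arrs Q" "tgt Q a = t0" by blast
      then have "a \<noteq> \<alpha>" using assms(4) by auto
      then show ?thesis using a unfolding is_path_def
        by (auto simp: sA sS sT nth_Cons split: nat.splits)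
    qed
  qed
  have srcv: "src ?Q a \<in> verts Q" if "a \<in> arrs ?Q" for a
    using that stv t0v by (auto simp: sA sS)
  have srcx: "src ?Q a \<noteq> x" if "a \<in> arrs ?Q" for a
    using srcv[OF that] assms(3) by metis
  have nilQ: "\<exists>r\<in>rels ?Q. subpath r p" if p: "is_path ?Q p" "length p = Suc n" for p
  proof -
    have pne: "p \<noteq> []" using p by auto
    have tlnot: "\<And>i. Suc i < length p \<Longrightarrow> p ! Suc i \<noteq> \<alpha>"
    proof
      fix i assume i: "Suc i < length p" and e: "p ! Suc i = \<alpha>"
      have "src ?Q (p ! i) = tgt ?Q (p ! Suc i)" using p(1) i unfolding is_path_def by auto
      also have "\<dots> = x" using e by (simp add: sT)
      finally have "src ?Q (p ! i) = x" .
      moreover have "p ! i \<in> arrs ?Q" using p(1) i unfolding is_path_def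
        by (metis Suc_lessD nth_mem subsetD)
      ultimately show False using srcv assms(3) by metis
    qed
    have "is_path Q (tl p)" unfolding is_path_def
    proof (intro conjI allI impI)
      show "tl p \<noteq> []" using p n1 by (cases p) auto
      show "set (tl p) \<subseteq> arrs Q"
      proof
        fix a assume "a \<in> set (tl p)"
        then obtain i where i: "i < length (tl p)" "tl p ! i = a" by (auto simp: in_set_conv_nth)
        then have "Suc i < length p" "p ! Suc i = a" using pne by (auto simp: nth_tl)
        moreover then have "a \<in> arrs ?Q" using p(1) unfolding is_path_def by (metis nth_mem subsetD)
        ultimately show "a \<in> arrs Q" using tlnot by (auto simp: sA)
      qed
      fix i assume i: "Suc i < length (tl p)"
      have a1: "p ! Suc i \<noteq> \<alpha>" "p ! Suc (Suc i) \<noteq> \<alpha>" using tlnot i by auto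
      have "src ?Q (p ! Suc i) = tgt ?Q (p ! Suc (Suc i))" using p(1) i unfolding is_path_def by auto
      then have "src Q (p ! Suc i) = tgt Q (p ! Suc (Suc i))" using a1 by (simp add: sS sT)
      then show "src Q (tl p ! i) = tgt Q (tl p ! Suc i)" using pne by (cases p) auto
    qed
    moreover have "length (tl p) = n" using p by simp
    ultimately obtain r where r: "r \<in> rels Q" "subpath r (tl p)" using nil by blast
    have "subpath r p" using r(2) pne unfolding subpath_def
      by (metis append_Cons list.collapse)
    then show ?thesis using r(1) by (auto simp: sR)
  qed
  have bq': "bound_quiver ?Q"
  proof -
    have "\<exists>m\<ge>1. \<forall>p. is_path ?Q p \<and> length p = m \<longrightarrow> (\<exists>r\<in>rels ?Q. subpath r p)"
      by (rule exI[of _ "Suc n"]) (use nilQ in auto)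
    then show ?thesis unfolding bound_quiver_def using isq noi rp by (intro conjI)
  qed
  define E where "E = (\<lambda>Q::('v,'a) bquiver. {(src Q a, tgt Q a) | a. a \<in> arrs Q} \<union> {(tgt Q a, src Q a) | a. a \<in> arrs Q})"
  have Esub: "E Q \<subseteq> E ?Q"
  proof
    fix e assume "e \<in> E Q"
    then obtain a where "a \<in> arrs Q" "e = (src Q a, tgt Q a) \<or> e = (tgt Q a, src Q a)"
      unfolding E_def by blast
    moreover then have "a \<noteq> \<alpha>" using assms(4) by auto
    ultimately show "e \<in> E ?Q" unfolding E_def by (auto simp: sA sS sT) 
  qed
  have e1: "(x, t0) \<in> E ?Q" and e2: "(t0, x) \<in> E ?Q" unfolding E_def
    by (auto simp: sA sS sT)
  have connQ: "\<forall>u\<in>verts Q. \<forall>v\<in>verts Q. (u, v) \<in> (E Q)\<^sup>*"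
    using conn unfolding connected_quiver_def E_def by blast
  have cQ': "(u, v) \<in> (E ?Q)\<^sup>*" if "u \<in> verts ?Q" "v \<in> verts ?Q" for u v
  proof -
    have m: "\<And>a b. a \<in> verts Q \<Longrightarrow> b \<in> verts Q \<Longrightarrow> (a, b) \<in> (E ?Q)\<^sup>*"
      using connQ rtrancl_mono[OF Esub] by blast
    have xv: "\<And>a. a \<in> verts Q \<Longrightarrow> (x, a) \<in> (E ?Q)\<^sup>*"
      using m[OF t0v] e1 by (meson converse_rtrancl_into_rtrancl)
    have vx: "\<And>a. a \<in> verts Q \<Longrightarrow> (a, x) \<in> (E ?Q)\<^sup>*"
      using m[OF _ t0v] e2 by (meson rtrancl_into_rtrancl)
    show ?thesis using that m xv vx by (auto simp: sV)
  qed
  have conn': "connected_quiver ?Q"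
    unfolding connected_quiver_def using cQ' by (auto simp: sV E_def)
  have rel2': "\<forall>r\<in>rels ?Q. length r = 2" using rel2 by (auto simp: sR)
  have deg': "\<forall>v\<in>verts ?Q. card {a\<in>arrs ?Q. src ?Q a = v} \<le> 2 \<and> card {a\<in>arrs ?Q. tgt ?Q a = v} \<le> 2"
  proof
    fix v assume v: "v \<in> verts ?Q"
    show "card {a\<in>arrs ?Q. src ?Q a = v} \<le> 2 \<and> card {a\<in>arrs ?Q. tgt ?Q a = v} \<le> 2"
    proof (cases "v = x")
      case True
      have e1: "{a\<in>arrs ?Q. src ?Q a = v} = {}" 
      proof -
        have "False" if "a \<in> arrs ?Q" "src ?Q a = v" for a
          using srcv[OF that(1)] that(2) True assms(3) by simp
        then show ?thesis by blast
      qed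
      moreover have e2: "{a\<in>arrs ?Q. tgt ?Q a = v} = {\<alpha>}" using True stv assms(3)
        by (auto simp: sA sT)
      show ?thesis by (simp only: e1 e2) simp
    next
      case False
      then have vQ: "v \<in> verts Q" using v by (simp add: sV)
      have i: "{a\<in>arrs ?Q. tgt ?Q a = v} = {a\<in>arrs Q. tgt Q a = v}"
        using False assms(4) by (auto simp: sA sT)
      have o: "{a\<in>arrs ?Q. src ?Q a = v} = (if v = t0 then insert \<alpha> {a\<in>arrs Q. src Q a = v} else {a\<in>arrs Q. src Q a = v})"
        using assms(4) by (auto simp: sA sS)
      have "card {a\<in>arrs ?Q. src ?Q a = v} \<le> 2"
      proof (cases "v = t0")
        case True
        have "card (insert \<alpha> {a\<in>arrs Q. src Q a = v}) \<le> Suc (card {a\<in>arrs Q. src Q a = v})"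
          using finA by (simp add: card_insert_if)
        then show ?thesis using o True outle1 by simp
      next
        case False then show ?thesis using o deg vQ by simp
      qed
      then show ?thesis using i deg vQ by simp
    qed
  qed
  have ac': "\<forall>\<gamma>\<in>arrs ?Q.
        card {\<beta>\<in>arrs ?Q. src ?Q \<beta> = tgt ?Q \<gamma> \<and> [\<beta>, \<gamma>] \<notin> rels ?Q} \<le> 1 \<and>
        card {\<beta>\<in>arrs ?Q. tgt ?Q \<beta> = src ?Q \<gamma> \<and> [\<gamma>, \<beta>] \<notin> rels ?Q} \<le> 1 \<and>
        card {\<beta>\<in>arrs ?Q. src ?Q \<beta> = tgt ?Q \<gamma> \<and> [\<beta>, \<gamma>] \<in> rels ?Q} \<le> 1 \<and>
        card {\<beta>\<in>arrs ?Q. tgt ?Q \<beta> = src ?Q \<gamma> \<and> [\<gamma>, \<beta>] \<in> rels ?Q} \<le> 1"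
  proof
    fix \<gamma> assume "\<gamma> \<in> arrs ?Q"
    then have "\<gamma> = \<alpha> \<or> \<gamma> \<in> arrs Q" by (simp add: sA)
    then show "card {\<beta>\<in>arrs ?Q. src ?Q \<beta> = tgt ?Q \<gamma> \<and> [\<beta>, \<gamma>] \<notin> rels ?Q} \<le> 1 \<and>
        card {\<beta>\<in>arrs ?Q. tgt ?Q \<beta> = src ?Q \<gamma> \<and> [\<gamma>, \<beta>] \<notin> rels ?Q} \<le> 1 \<and>
        card {\<beta>\<in>arrs ?Q. src ?Q \<beta> = tgt ?Q \<gamma> \<and> [\<beta>, \<gamma>] \<in> rels ?Q} \<le> 1 \<and>
        card {\<beta>\<in>arrs ?Q. tgt ?Q \<beta> = src ?Q \<gamma> \<and> [\<gamma>, \<beta>] \<in> rels ?Q} \<le> 1"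
    proof
      assume g: "\<gamma> = \<alpha>"
      have s1: "{\<beta>\<in>arrs ?Q. src ?Q \<beta> = tgt ?Q \<gamma> \<and> P \<beta>} = {}" for P
        using g srcx by (auto simp: sT)
      have c2: "card {\<beta>\<in>arrs ?Q. tgt ?Q \<beta> = src ?Q \<gamma> \<and> [\<gamma>, \<beta>] \<notin> rels ?Q} \<le> 1"
      proof (rule card_le1I)
        have "\<And>b. b \<in> {\<beta>\<in>arrs ?Q. tgt ?Q \<beta> = src ?Q \<gamma> \<and> [\<gamma>, \<beta>] \<notin> rels ?Q} \<Longrightarrow> b = hd \<sigma>"
        proof -
          fix b assume b: "b \<in> {\<beta>\<in>arrs ?Q. tgt ?Q \<beta> = src ?Q \<gamma> \<and> [\<gamma>, \<beta>] \<notin> rels ?Q}"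
          have st: "src ?Q \<gamma> = t0" using g by (simp add: sS)
          have bna: "b \<noteq> \<alpha>" using b st xt0 by (auto simp: sT)
          have "b \<in> arrs Q" "tgt Q b = t0" "[\<alpha>, b] \<notin> rels ?Q" using b bna st g by (auto simp: sA sT)
          then show "b = hd \<sigma>" using relsQ'[of \<alpha> b] by blast
        qed
        then show "\<And>a b. a \<in> {\<beta>\<in>arrs ?Q. tgt ?Q \<beta> = src ?Q \<gamma> \<and> [\<gamma>, \<beta>] \<notin> rels ?Q} \<Longrightarrow>
             b \<in> {\<beta>\<in>arrs ?Q. tgt ?Q \<beta> = src ?Q \<gamma> \<and> [\<gamma>, \<beta>] \<notin> rels ?Q} \<Longrightarrow> a = b" by blast
      qed
      have c4: "card {\<beta>\<in>arrs ?Q. tgt ?Q \<beta> = src ?Q \<gamma> \<and> [\<gamma>, \<beta>] \<in> rels ?Q} \<le> 1"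
      proof (rule card_le1I)
        have mem: "\<And>b. b \<in> {\<beta>\<in>arrs ?Q. tgt ?Q \<beta> = src ?Q \<gamma> \<and> [\<gamma>, \<beta>] \<in> rels ?Q} \<Longrightarrow>
             b \<in> arrs Q \<and> tgt Q b = t0 \<and> b \<noteq> hd \<sigma>"
          using g xt0 relsQ' relsarr2 assms(4) by (auto simp: sA sS sT)
        fix a b assume a: "a \<in> {\<beta>\<in>arrs ?Q. tgt ?Q \<beta> = src ?Q \<gamma> \<and> [\<gamma>, \<beta>] \<in> rels ?Q}"
          and b: "b \<in> {\<beta>\<in>arrs ?Q. tgt ?Q \<beta> = src ?Q \<gamma> \<and> [\<gamma>, \<beta>] \<in> rels ?Q}"
        show "a = b"
        proof (rule ccontr)
          assume ab: "a \<noteq> b"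
          have "{hd \<sigma>, a, b} \<subseteq> {a\<in>arrs Q. tgt Q a = t0}" using mem[OF a] mem[OF b] hdarr t0_def by auto
          then have "card {hd \<sigma>, a, b} \<le> card {a\<in>arrs Q. tgt Q a = t0}" by (rule card_mono[OF finS])
          then have "card {hd \<sigma>, a, b} \<le> 2" using inle2 by linarith
          moreover have "card {hd \<sigma>, a, b} = 3" using ab mem[OF a] mem[OF b] by auto
          ultimately show False by simp
        qed
      qed
      show ?thesis by (simp only: s1 c2 c4) simp
    next
      assume g: "\<gamma> \<in> arrs Q"
      have gna: "\<gamma> \<noteq> \<alpha>" using g assms(4) by auto
      have acg: "card {\<beta>\<in>arrs Q. src Q \<beta> = tgt Q \<gamma> \<and> [\<beta>, \<gamma>] \<notin> rels Q} \<le> 1"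
        "card {\<beta>\<in>arrs Q. tgt Q \<beta> = src Q \<gamma> \<and> [\<gamma>, \<beta>] \<notin> rels Q} \<le> 1"
        "card {\<beta>\<in>arrs Q. src Q \<beta> = tgt Q \<gamma> \<and> [\<beta>, \<gamma>] \<in> rels Q} \<le> 1"
        "card {\<beta>\<in>arrs Q. tgt Q \<beta> = src Q \<gamma> \<and> [\<gamma>, \<beta>] \<in> rels Q} \<le> 1"
        using ac1[OF g] ac2[OF g] ac3[OF g] ac4[OF g] by auto
      have e2: "{\<beta>\<in>arrs ?Q. tgt ?Q \<beta> = src ?Q \<gamma> \<and> [\<gamma>, \<beta>] \<notin> rels ?Q} = {\<beta>\<in>arrs Q. tgt Q \<beta> = src Q \<gamma> \<and> [\<gamma>, \<beta>] \<notin> rels Q}"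
        using gna relsQ' stv[OF g] assms(3) assms(4) by (auto simp: sA sS sT)
      have e4: "{\<beta>\<in>arrs ?Q. tgt ?Q \<beta> = src ?Q \<gamma> \<and> [\<gamma>, \<beta>] \<in> rels ?Q} = {\<beta>\<in>arrs Q. tgt Q \<beta> = src Q \<gamma> \<and> [\<gamma>, \<beta>] \<in> rels Q}"
        using gna relsQ' stv[OF g] assms(3) assms(4) by (auto simp: sA sS sT)
      have c1: "card {\<beta>\<in>arrs ?Q. src ?Q \<beta> = tgt ?Q \<gamma> \<and> [\<beta>, \<gamma>] \<notin> rels ?Q} \<le> 1"
      proof (rule card_le1I)
        have mem: "\<And>b. b \<in> {\<beta>\<in>arrs ?Q. src ?Q \<beta> = tgt ?Q \<gamma> \<and> [\<beta>, \<gamma>] \<notin> rels ?Q} \<Longrightarrow>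
           (b = \<alpha> \<and> tgt Q \<gamma> = t0 \<and> \<gamma> = hd \<sigma>) \<or> (b \<in> {\<beta>\<in>arrs Q. src Q \<beta> = tgt Q \<gamma> \<and> [\<beta>, \<gamma>] \<notin> rels Q})"
        proof -
          fix b assume b: "b \<in> {\<beta>\<in>arrs ?Q. src ?Q \<beta> = tgt ?Q \<gamma> \<and> [\<beta>, \<gamma>] \<notin> rels ?Q}"
          have tg: "tgt ?Q \<gamma> = tgt Q \<gamma>" using gna by (simp add: sT)
          show "(b = \<alpha> \<and> tgt Q \<gamma> = t0 \<and> \<gamma> = hd \<sigma>) \<or> (b \<in> {\<beta>\<in>arrs Q. src Q \<beta> = tgt Q \<gamma> \<and> [\<beta>, \<gamma>] \<notin> rels Q})"
          proof (cases "b = \<alpha>")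
            case True
            then have "t0 = tgt Q \<gamma>" "[\<alpha>, \<gamma>] \<notin> rels ?Q" using b tg by (auto simp: sS)
            then show ?thesis using relsQ'[of \<alpha> \<gamma>] g True by auto
          next
            case False
            then show ?thesis using b tg relsQ'[of b \<gamma>] by (auto simp: sA sS)
          qed
        qed
        fix a b assume a: "a \<in> {\<beta>\<in>arrs ?Q. src ?Q \<beta> = tgt ?Q \<gamma> \<and> [\<beta>, \<gamma>] \<notin> rels ?Q}"
          and b: "b \<in> {\<beta>\<in>arrs ?Q. src ?Q \<beta> = tgt ?Q \<gamma> \<and> [\<beta>, \<gamma>] \<notin> rels ?Q}"
        show "a = b"
        proof (cases "a = \<alpha> \<or> b = \<alpha>")
          case False
          then have "a \<in> {\<beta>\<in>arrs Q. src Q \<beta> = tgt Q \<gamma> \<and> [\<beta>, \<gamma>] \<notin> rels Q}"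
            "b \<in> {\<beta>\<in>arrs Q. src Q \<beta> = tgt Q \<gamma> \<and> [\<beta>, \<gamma>] \<notin> rels Q}"
            using mem[OF a] mem[OF b] by blast+
          then show ?thesis by (rule card_le1D[OF acg(1) finS])
        next
          case True
          then have hg: "tgt Q \<gamma> = t0" "\<gamma> = hd \<sigma>" using mem[OF a] mem[OF b] assms(4) by auto
          have "a = \<alpha>" 
          proof (rule ccontr)
            assume "a \<noteq> \<alpha>"
            then have "a \<in> arrs Q" "src Q a = t0" "[a, \<gamma>] \<notin> rels Q" using mem[OF a] hg by auto
            then show False using maxk hg by blast
          qed
          moreover have "b = \<alpha>" 
          proof (rule ccontr)
            assume "b \<noteq> \<alpha>"
            then have "b \<in> arrs Q" "src Q b = t0" "[b, \<gamma>] \<notin> rels Q" using mem[OF b] hg by auto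
            then show False using maxk hg by blast
          qed
          ultimately show ?thesis by simp
        qed
      qed
      have c3: "card {\<beta>\<in>arrs ?Q. src ?Q \<beta> = tgt ?Q \<gamma> \<and> [\<beta>, \<gamma>] \<in> rels ?Q} \<le> 1"
      proof (rule card_le1I)
        have mem: "\<And>b. b \<in> {\<beta>\<in>arrs ?Q. src ?Q \<beta> = tgt ?Q \<gamma> \<and> [\<beta>, \<gamma>] \<in> rels ?Q} \<Longrightarrow>
           (b = \<alpha> \<and> tgt Q \<gamma> = t0 \<and> \<gamma> \<noteq> hd \<sigma>) \<or> (b \<in> {\<beta>\<in>arrs Q. src Q \<beta> = tgt Q \<gamma> \<and> [\<beta>, \<gamma>] \<in> rels Q})"
        proof -
          fix b assume b: "b \<in> {\<beta>\<in>arrs ?Q. src ?Q \<beta> = tgt ?Q \<gamma> \<and> [\<beta>, \<gamma>] \<in> rels ?Q}"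
          have tg: "tgt ?Q \<gamma> = tgt Q \<gamma>" using gna by (simp add: sT)
          show "(b = \<alpha> \<and> tgt Q \<gamma> = t0 \<and> \<gamma> \<noteq> hd \<sigma>) \<or> (b \<in> {\<beta>\<in>arrs Q. src Q \<beta> = tgt Q \<gamma> \<and> [\<beta>, \<gamma>] \<in> rels Q})"
          proof (cases "b = \<alpha>")
            case True
            then have "t0 = tgt Q \<gamma>" "[\<alpha>, \<gamma>] \<in> rels ?Q" using b tg by (auto simp: sS)
            then show ?thesis using relsQ'[of \<alpha> \<gamma>] relsarr2[of \<alpha> \<gamma>] assms(4) True by auto
          next
            case False
            then show ?thesis using b tg relsQ'[of b \<gamma>] by (auto simp: sA sS)
          qed
        qed
        fix a b assume a: "a \<in> {\<beta>\<in>arrs ?Q. src ?Q \<beta> = tgt ?Q \<gamma> \<and> [\<beta>, \<gamma>] \<in> rels ?Q}"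
          and b: "b \<in> {\<beta>\<in>arrs ?Q. src ?Q \<beta> = tgt ?Q \<gamma> \<and> [\<beta>, \<gamma>] \<in> rels ?Q}"
        show "a = b"
        proof (cases "a = \<alpha> \<or> b = \<alpha>")
          case False
          then have "a \<in> {\<beta>\<in>arrs Q. src Q \<beta> = tgt Q \<gamma> \<and> [\<beta>, \<gamma>] \<in> rels Q}"
            "b \<in> {\<beta>\<in>arrs Q. src Q \<beta> = tgt Q \<gamma> \<and> [\<beta>, \<gamma>] \<in> rels Q}"
            using mem[OF a] mem[OF b] by blast+
          then show ?thesis by (rule card_le1D[OF acg(3) finS])
        next
          case True
          then have hg: "tgt Q \<gamma> = t0" "\<gamma> \<noteq> hd \<sigma>" using mem[OF a] mem[OF b] assms(4) by auto
          have "a = \<alpha>" 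
          proof (rule ccontr)
            assume "a \<noteq> \<alpha>"
            then have "a \<in> arrs Q" "src Q a = t0" "[a, \<gamma>] \<in> rels Q" using mem[OF a] hg by auto
            then show False using no3[OF g hg(1) hg(2)] by blast
          qed
          moreover have "b = \<alpha>" 
          proof (rule ccontr)
            assume "b \<noteq> \<alpha>"
            then have "b \<in> arrs Q" "src Q b = t0" "[b, \<gamma>] \<in> rels Q" using mem[OF b] hg by auto
            then show False using no3[OF g hg(1) hg(2)] by blast
          qed
          ultimately show ?thesis by simp
        qed
      qed
      show ?thesis using c1 c3 e2 e4 acg by simp
    qed
  qed
  show ?thesis unfolding gentle_def using bq' conn' rel2' deg' ac' by blast
qed

end
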